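(* Assume $1-1/\gamma<\beta<1$, let $\chi=\frac{1-\gamma(1-\beta)}{\beta}\in(0,1)$ and $0<\epsilon<\chi$. Define the event $$A_{N,\epsilon}=\Big\{\{i\ge1:\ w_i\ge N^{-(\chi-\epsilon)}\}\subseteq\{I^N_1,\dots,I^N_N\}\Big\}.$$ Then $\lim_{N\to\infty}\log(N)\,\mathbb P(A_{N,\epsilon}^c)=0$.
   Context: Fix $\gamma>1$, $\beta\in(0,1)$. $\Xi$ is a Poisson point process on $(0,\infty)$ with intensity $x^{-2}dx$ and atoms $w_1>w_2>\cdots$. Conditionally on $\Xi$, $I^N=(I^N_1,\dots,I^N_N)$ are $N$ indices sampled without replacement from $\{1,\dots,\lceil N^\gamma\rceil\}$ with weights $w_i^\beta$ (each successive draw picks a not-yet-drawn index $i$ with probability proportional to $w_i^\beta$ among the not-yet-drawn ones). *)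

theory Defs
  imports "HOL-Probability.Probability"
begin

definition ppp_intensity :: "real set \<Rightarrow> real" where
  "ppp_intensity B = (LINT t:B|lborel. 1 / t ^ 2)"

definition atom_count :: "(nat \<Rightarrow> real) \<Rightarrow> real set \<Rightarrow> nat" where
  "atom_count w B = card {i. 1 \<le> i \<and> w i \<in> B}"

text \<open>The random sequence w (indexed from 1, w 1 > w 2 > ... > 0) enumerates the atoms of a
  Poisson point process on (0,infinity) with intensity x^(-2) dx: for Borel sets bounded away
  from 0 the counts are Poisson(Lambda(B)) distributed, and counts of disjoint such sets are
  independent.\<close>
definition is_ppp_atoms :: "'a measure \<Rightarrow> ('a \<Rightarrow> nat \<Rightarrow> real) \<Rightarrow> bool" where
  "is_ppp_atoms M w \<longleftrightarrow>
     prob_space M \<and>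
     (\<forall>i. (\<lambda>x. w x i) \<in> borel_measurable M) \<and>
     (\<forall>x. (\<forall>i\<ge>1. 0 < w x i) \<and> (\<forall>i\<ge>1. w x (Suc i) < w x i)) \<and>
     (\<forall>B t. B \<in> sets borel \<longrightarrow> 0 < t \<longrightarrow> B \<subseteq> {t..} \<longrightarrow>
        (\<forall>k. measure M {x \<in> space M. atom_count (w x) B = k}
              = ppp_intensity B ^ k / fact k * exp (- ppp_intensity B))) \<and>
     (\<forall>(J::nat set) B t. finite J \<longrightarrow> 0 < t \<longrightarrow> (\<forall>j\<in>J. B j \<in> sets borel \<and> B j \<subseteq> {t..}) \<longrightarrow>
        disjoint_family_on B J \<longrightarrow>
        prob_space.indep_vars M (\<lambda>_. count_space UNIV) (\<lambda>j x. atom_count (w x) (B j)) J)"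

definition weighted_pick :: "(nat \<Rightarrow> real) \<Rightarrow> nat set \<Rightarrow> nat pmf" where
  "weighted_pick p S = embed_pmf (\<lambda>i. if i \<in> S then p i / sum p S else 0)"

primrec sample_wor :: "(nat \<Rightarrow> real) \<Rightarrow> nat \<Rightarrow> nat set \<Rightarrow> nat list pmf" where
  "sample_wor p 0 S = return_pmf []"
| "sample_wor p (Suc k) S =
     bind_pmf (weighted_pick p S) (\<lambda>i. map_pmf (\<lambda>is. i # is) (sample_wor p k (S - {i})))"

end

theory Submission
  imports Defs "HOL-Real_Asymp.Real_Asymp"
begin



lemma wp_pmf:
  assumes "finite S" "S \<noteq> {}" "\<And>j. j \<in> S \<Longrightarrow> 0 < p j"
  shows "pmf (weighted_pick p S) j = (if j \<in> S then p j / sum p S else 0)"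
proof -
  have pos: "0 < sum p S" using assms by (simp add: sum_pos)
  let ?f = "\<lambda>i. if i \<in> S then p i / sum p S else 0"
  have nn: "\<And>i. 0 \<le> ?f i" using assms pos by (auto intro: less_imp_le)
  have "(\<integral>\<^sup>+x. ennreal (?f x) \<partial>count_space UNIV) = (\<integral>\<^sup>+x. ennreal (?f x) \<partial>count_space S)"
    by (auto simp: nn_integral_count_space_indicator intro!: nn_integral_cong split: split_indicator)
  also have "\<dots> = (\<Sum>x\<in>S. ennreal (?f x))"
    using assms(1) by (simp add: nn_integral_count_space_finite)
  also have "\<dots> = ennreal (\<Sum>x\<in>S. ?f x)"
    by (rule sum_ennreal) (use nn in \<open>auto simp: if_split_mem2\<close>, metis nn)
  also have "(\<Sum>x\<in>S. ?f x) = 1"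
    using pos by (simp add: sum_divide_distrib[symmetric])
  finally have "(\<integral>\<^sup>+x. ennreal (?f x) \<partial>count_space UNIV) = 1" by simp
  then show ?thesis unfolding weighted_pick_def
    using pmf_embed_pmf[of ?f, OF nn] by simp
qed

lemma set_wp:
  assumes "finite S" "S \<noteq> {}" "\<And>j. j \<in> S \<Longrightarrow> 0 < p j"
  shows "set_pmf (weighted_pick p S) \<subseteq> S"
  using wp_pmf[OF assms] by (auto simp: set_pmf_eq)

lemma sample_miss:
  assumes "finite S" "i \<in> S" "\<And>j. j \<in> S \<Longrightarrow> 0 < p j"
  shows "measure_pmf.prob (sample_wor p k S) {Is. i \<notin> set Is} \<le> (1 - p i / sum p S) ^ k"
  using assms
proof (induction k arbitrary: S)
  case 0
  then show ?case by simp
next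
  case (Suc k)
  have ne: "S \<noteq> {}" using Suc by auto
  have pos: "0 < sum p S" using Suc ne by (simp add: sum_pos)
  define r where "r = 1 - p i / sum p S"
  have "p i \<le> sum p S" by (rule member_le_sum) (use Suc.prems in \<open>auto intro: less_imp_le\<close>)
  then have r0: "0 \<le> r" unfolding r_def using pos by simp
  have bnd: "measure_pmf.prob (sample_wor p k (S - {j})) {Is. i \<notin> set Is} \<le> r ^ k"
    if "j \<in> S" "j \<noteq> i" for j
  proof -
    have "measure_pmf.prob (sample_wor p k (S - {j})) {Is. i \<notin> set Is} \<le> (1 - p i / sum p (S - {j})) ^ k"
      using Suc.IH[of "S - {j}"] Suc.prems that by auto
    also have "\<dots> \<le> r ^ k"
    proof (rule power_mono)
      have s1: "0 < sum p (S - {j})" using Suc.prems that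
        by (intro sum_pos) auto
      have s2: "sum p (S - {j}) \<le> sum p S" using Suc.prems that
        by (intro sum_mono2) (auto intro: less_imp_le)
      have "p i / sum p S \<le> p i / sum p (S - {j})"
        using s1 s2 Suc.prems by (intro divide_left_mono) (auto intro: less_imp_le)
      then show "1 - p i / sum p (S - {j}) \<le> r" unfolding r_def by simp
      have "p i \<le> sum p (S - {j})" using Suc.prems that
        by (intro member_le_sum) (auto intro: less_imp_le)
      then show "0 \<le> 1 - p i / sum p (S - {j})" using s1 by simp
    qed
    finally show ?thesis .
  qed
  define W where "W = weighted_pick p S"
  have pmfW: "\<And>j. pmf W j = (if j \<in> S then p j / sum p S else 0)"
    unfolding W_def by (rule wp_pmf) (use Suc.prems ne in auto)
  have setW: "set_pmf W \<subseteq> S" unfolding W_def by (rule set_wp) (use Suc.prems ne in auto)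
  let ?g = "\<lambda>j. measure_pmf.prob (sample_wor p k (S - {j})) {Is. i \<notin> set Is}"
  let ?h = "\<lambda>j. if j = i then 0 else ?g j"
  have "emeasure (measure_pmf (sample_wor p (Suc k) S)) {Is. i \<notin> set Is}
      = (\<integral>\<^sup>+j. emeasure (measure_pmf (sample_wor p k (S - {j}))) ((\<lambda>is. j # is) -` {Is. i \<notin> set Is}) \<partial>measure_pmf W)"
    by (simp add: W_def map_pmf_rep_eq emeasure_distr)
  also have "\<dots> = (\<integral>\<^sup>+j. ennreal (?h j) \<partial>measure_pmf W)"
    by (intro nn_integral_cong) (auto simp: measure_pmf.emeasure_eq_measure)
  also have "\<dots> = (\<Sum>j\<in>S. ennreal (?h j) * pmf W j)"
    using setW Suc.prems by (intro nn_integral_measure_pmf_support) auto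
  also have "\<dots> \<le> (\<Sum>j\<in>S. ennreal ((if j = i then 0 else r ^ k) * pmf W j))"
    using bnd by (intro sum_mono) (auto simp: ennreal_mult[symmetric] intro!: ennreal_leI mult_right_mono)
  also have "\<dots> = ennreal (\<Sum>j\<in>S. (if j = i then 0 else r ^ k) * pmf W j)"
    using r0 by (intro sum_ennreal) auto
  also have "(\<Sum>j\<in>S. (if j = i then 0 else r ^ k) * pmf W j) = r ^ k * (\<Sum>j\<in>S - {i}. pmf W j)"
  proof -
    have "(\<Sum>j\<in>S. (if j = i then 0 else r ^ k) * pmf W j) = (\<Sum>j\<in>S - {i}. (if j = i then 0 else r ^ k) * pmf W j)"
      using Suc.prems by (intro sum.mono_neutral_right) auto
    also have "\<dots> = r ^ k * (\<Sum>j\<in>S - {i}. pmf W j)"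
      by (simp add: sum_distrib_left)
    finally show ?thesis .
  qed
  also have "(\<Sum>j\<in>S - {i}. pmf W j) = r"
  proof -
    have "(\<Sum>j\<in>S - {i}. pmf W j) = (\<Sum>j\<in>S. pmf W j) - pmf W i"
      using Suc.prems by (simp add: sum_diff1)
    also have "(\<Sum>j\<in>S. pmf W j) = 1"
      using pos by (simp add: pmfW sum_divide_distrib[symmetric])
    finally show ?thesis using Suc.prems by (simp add: pmfW r_def)
  qed
  finally have "emeasure (measure_pmf (sample_wor p (Suc k) S)) {Is. i \<notin> set Is} \<le> ennreal (r ^ Suc k)"
    by (simp add: mult.commute)
  then show ?case unfolding r_def[symmetric]
    by (simp add: measure_pmf.emeasure_eq_measure r0)
qed



lemma intensity_Ici:
  assumes "0 < (u::real)"
  shows "ppp_intensity {u..} = 1 / u"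
proof -
  have hi: "((\<lambda>x::real. 1 / x ^ 2) has_integral 1 / u) {u..}"
    using has_integral_inverse_power_to_inf[of 2 u] assms by simp
  then have "(\<lambda>x::real. 1 / x ^ 2) integrable_on {u..}" by blast
  then have "(\<lambda>x::real. 1 / x ^ 2) absolutely_integrable_on {u..}"
    by (subst absolutely_integrable_on_iff_nonneg) auto
  then have "integrable lborel (\<lambda>x::real. indicat_real {u..} x *\<^sub>R (1 / x ^ 2))"
    unfolding set_integrable_def
    by (subst (asm) integrable_completion) auto
  then have "set_integrable lborel {u..} (\<lambda>x::real. 1 / x ^ 2)"
    unfolding set_integrable_def .
  then have "(LINT x : {u..} | lborel. 1 / x ^ 2) = integral {u..} (\<lambda>x::real. 1 / x ^ 2)"
    by (rule set_borel_integral_eq_integral)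
  also have "\<dots> = 1 / u" using hi by (rule integral_unique)
  finally show ?thesis unfolding ppp_intensity_def .
qed



lemma tail_bound:
  assumes ppp: "is_ppp_atoms M w" and B: "B \<in> sets borel" "0 < t" "B \<subseteq> {t..}"
    and L: "0 < ppp_intensity B" and c: "1 \<le> c"
  shows "{x \<in> space M. a \<le> atom_count (w x) B} \<in> sets M"
    "measure M {x \<in> space M. a \<le> atom_count (w x) B} \<le> exp (c * ppp_intensity B) / c ^ a"
proof -
  define \<Lambda> where "\<Lambda> = ppp_intensity B"
  interpret prob_space M using ppp unfolding is_ppp_atoms_def by blast
  define A where "A k = {x \<in> space M. atom_count (w x) B = k}" for k
  have mA: "measure M (A k) = \<Lambda> ^ k / fact k * exp (- \<Lambda>)" for k
    using ppp B unfolding is_ppp_atoms_def A_def \<Lambda>_def by blast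
  have sA: "A k \<in> sets M" for k
  proof (rule ccontr)
    assume "A k \<notin> sets M"
    then have "measure M (A k) = 0" by (rule measure_notin_sets)
    moreover have "0 < \<Lambda> ^ k / fact k * exp (- \<Lambda>)" using L unfolding \<Lambda>_def by (intro mult_pos_pos divide_pos_pos zero_less_power) auto
    ultimately show False using mA[of k] by linarith
  qed
  have eq: "{x \<in> space M. a \<le> atom_count (w x) B} = (\<Union>i. A (i + a))"
    unfolding A_def by (auto intro: le_Suc_ex dest: le_Suc_ex)
  have disj: "disjoint_family (\<lambda>i. A (i + a))"
    unfolding disjoint_family_on_def A_def by auto
  show "{x \<in> space M. a \<le> atom_count (w x) B} \<in> sets M"
    unfolding eq using sA by blast
  have s1: "(\<lambda>i. measure M (A (i + a))) sums measure M {x \<in> space M. a \<le> atom_count (w x) B}"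
    unfolding eq by (rule finite_measure_UNION) (use sA disj in auto)
  have "(\<lambda>n. (c * \<Lambda>) ^ n / fact n) sums exp (c * \<Lambda>)"
    using exp_converges[of "c * \<Lambda>"] by (simp add: divide_inverse mult.commute)
  then have "(\<lambda>i. (c * \<Lambda>) ^ (i + a) / fact (i + a)) sums (exp (c * \<Lambda>) - (\<Sum>i<a. (c * \<Lambda>) ^ i / fact i))"
    by (rule sums_split_initial_segment)
  then have s2: "(\<lambda>i. (c * \<Lambda>) ^ (i + a) / fact (i + a) / c ^ a) sums ((exp (c * \<Lambda>) - (\<Sum>i<a. (c * \<Lambda>) ^ i / fact i)) / c ^ a)"
    by (rule sums_divide)
  have Lpos: "0 < \<Lambda>" using L unfolding \<Lambda>_def .
  have le: "measure M (A (i + a)) \<le> (c * \<Lambda>) ^ (i + a) / fact (i + a) / c ^ a" for i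
  proof -
    have "measure M (A (i + a)) = \<Lambda> ^ (i + a) / fact (i + a) * exp (- \<Lambda>)" by (rule mA)
    also have "\<dots> \<le> \<Lambda> ^ (i + a) / fact (i + a)"
      using Lpos by (intro mult_left_le) auto
    also have "\<dots> \<le> (c * \<Lambda>) ^ (i + a) / fact (i + a) / c ^ a"
    proof -
      have "c ^ a * \<Lambda> ^ (i + a) \<le> c ^ (i + a) * \<Lambda> ^ (i + a)"
        using c Lpos by (intro mult_right_mono power_increasing) auto
      then have "\<Lambda> ^ (i + a) \<le> (c * \<Lambda>) ^ (i + a) / c ^ a"
        using c by (simp add: field_simps power_mult_distrib)
      then show ?thesis using c by (simp add: divide_right_mono field_simps)
    qed
    finally show ?thesis .
  qed
  have "measure M {x \<in> space M. a \<le> atom_count (w x) B} \<le> (exp (c * \<Lambda>) - (\<Sum>i<a. (c * \<Lambda>) ^ i / fact i)) / c ^ a"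
    by (rule sums_le[OF le s1 s2])
  also have "\<dots> \<le> exp (c * \<Lambda>) / c ^ a"
    using c Lpos by (intro divide_right_mono) (auto intro!: sum_nonneg)
  finally show "measure M {x \<in> space M. a \<le> atom_count (w x) B} \<le> exp (c * ppp_intensity B) / c ^ a"
    unfolding \<Lambda>_def .
qed



lemma dec_le:
  assumes "\<forall>i\<ge>1. w (Suc i) < (w i :: real)" "1 \<le> i" "i \<le> j"
  shows "w j \<le> w i"
  using assms(3)
proof (induction j rule: dec_induct)
  case base then show ?case by simp
next
  case (step m)
  have "1 \<le> m" using step.hyps assms(2) by simp
  then have "w (Suc m) < w m" using assms(1) by simp
  then show ?case using step.IH by simp
qed

lemma count_ge:
  assumes "\<forall>i\<ge>1. w (Suc i) < (w i :: real)" "finite {i. 1 \<le> i \<and> w i \<in> {u..}}"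
    "1 \<le> j" "u \<le> w j"
  shows "j \<le> atom_count w {u..}"
proof -
  have "{1..j} \<subseteq> {i. 1 \<le> i \<and> w i \<in> {u..}}"
  proof
    fix i assume "i \<in> {1..j}"
    then have "w j \<le> w i" using dec_le[OF assms(1), of i j] by simp
    then show "i \<in> {i. 1 \<le> i \<and> w i \<in> {u..}}" using assms(4) \<open>i \<in> {1..j}\<close> by simp
  qed
  from card_mono[OF assms(2) this] show ?thesis unfolding atom_count_def by simp
qed

lemma finite_count:
  assumes "atom_count w {v..} \<noteq> 0" "v \<le> u"
  shows "finite {i. 1 \<le> i \<and> w i \<in> {u..}}"
proof -
  have "finite {i. 1 \<le> i \<and> w i \<in> {v..}}"
    using assms(1) unfolding atom_count_def by (meson card.infinite)
  then show ?thesis by (rule finite_subset[rotated]) (use assms(2) in auto)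
qed


lemma step_ineq:
  fixes b :: real and n :: nat
  assumes "0 < b" "b < 1"
  shows "(1 - b) * real (Suc n) powr (- b) \<le> real (Suc n) powr (1 - b) - real n powr (1 - b)"
proof (cases "n = 0")
  case True then show ?thesis using assms by simp
next
  case False
  define m where "m = real (Suc n)"
  have m: "m = real n + 1" "0 < m" unfolding m_def by auto
  then have np: "0 < real n" using False by simp
  have "real n powr (1 - b) * m powr b \<le> (1 - b) * real n + b * m"
    using assms np m by (intro Youngs_inequality_0) auto
  also have "\<dots> = real n + b" using m by (simp add: algebra_simps)
  finally have y: "real n powr (1 - b) * m powr b \<le> real n + b" .
  have mm: "m powr b * m powr (-b) = 1"
    using m by (simp flip: powr_add)
  have "real n powr (1 - b) = real n powr (1 - b) * m powr b * m powr (-b)"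
    using mm by (simp add: mult.assoc)
  also have "\<dots> \<le> (real n + b) * m powr (-b)"
    using y by (intro mult_right_mono) auto
  finally have a: "real n powr (1 - b) \<le> (real n + b) * m powr (-b)" .
  have b: "m powr (1 - b) = m * m powr (-b)"
    using powr_add[of m 1 "-b"] m by simp
  have "(1 - b) * m powr (- b) = m * m powr (-b) - (real n + b) * m powr (-b)"
    using m by (simp add: algebra_simps)
  also have "\<dots> \<le> m powr (1 - b) - real n powr (1 - b)" using a b by simp
  finally show ?thesis unfolding m_def .
qed

lemma sum_powr_bound:
  fixes b :: real
  assumes "0 < b" "b < 1"
  shows "(\<Sum>j=1..n. real j powr (- b)) \<le> real n powr (1 - b) / (1 - b)"
proof (induction n)
  case 0 then show ?case by simp
next
  case (Suc n)
  have "(\<Sum>j=1..Suc n. real j powr (- b)) = (\<Sum>j=1..n. real j powr (- b)) + real (Suc n) powr (-b)"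
    by simp
  also have "\<dots> \<le> real n powr (1 - b) / (1 - b) + real (Suc n) powr (-b)"
    using Suc by simp
  also have "real (Suc n) powr (-b) \<le> (real (Suc n) powr (1 - b) - real n powr (1 - b)) / (1 - b)"
    using step_ineq[OF assms, of n] assms by (simp add: pos_le_divide_eq mult.commute)
  also have "real n powr (1 - b) / (1 - b) + (real (Suc n) powr (1 - b) - real n powr (1 - b)) / (1 - b)
     = real (Suc n) powr (1 - b) / (1 - b)"
    by (simp add: diff_divide_distrib)
  finally show ?case by simp
qed



lemma per_N:
  fixes M :: "'a measure" and w :: "'a \<Rightarrow> nat \<Rightarrow> real"
  assumes ppp: "is_ppp_atoms M w" and b: "0 < \<beta>" "\<beta> < 1"
    and n: "1 \<le> n" and v: "0 < v" and t: "v \<le> t" and u: "\<And>j. j \<in> {1..n} \<Longrightarrow> v \<le> u j"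
    and Q: "(\<Sum>j=1..n. u j powr \<beta>) \<le> Q"
  defines "B1 \<equiv> {x \<in> space M. atom_count (w x) {v..} = 0}"
    and "B2 \<equiv> {x \<in> space M. Suc n \<le> atom_count (w x) {t..}}"
    and "B3 \<equiv> \<lambda>j. {x \<in> space M. j \<le> atom_count (w x) {u j..}}"
  shows "enn2real (\<integral>\<^sup>+ x. ennreal (measure_pmf.prob
                (sample_wor (\<lambda>i. w x i powr \<beta>) N {1..n})
                {Is. \<not> ({i. 1 \<le> i \<and> w x i \<ge> t} \<subseteq> set Is)}) \<partial>M)
     \<le> measure M B1 + measure M B2 + (\<Sum>j=1..n. measure M (B3 j)) + real n * exp (- (real N * t powr \<beta> / Q))"
proof -
  interpret prob_space M using ppp unfolding is_ppp_atoms_def by blast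
  have wpos: "\<And>x i. 1 \<le> i \<Longrightarrow> 0 < w x i" and wdec: "\<And>x. \<forall>i\<ge>1. w x (Suc i) < w x i"
    using ppp unfolding is_ppp_atoms_def by auto
  have tpos: "0 < t" using v t by simp
  have upos: "\<And>j. j \<in> {1..n} \<Longrightarrow> 0 < u j" using u v by force
  have Lpos: "0 < ppp_intensity {s..}" if "0 < s" for s using intensity_Ici[OF that] that by simp
  have sB: "{x \<in> space M. k \<le> atom_count (w x) {s..}} \<in> sets M" if "0 < s" for s k
    by (rule tail_bound(1)[OF ppp _ that order.refl Lpos[OF that], of 1]) auto
  have sB1: "B1 \<in> sets M"
  proof -
    have "B1 = space M - {x \<in> space M. 1 \<le> atom_count (w x) {v..}}" unfolding B1_def by auto
    then show ?thesis using sB[OF v] by auto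
  qed
  have sB2: "B2 \<in> sets M" unfolding B2_def using sB tpos by blast
  have sB3: "\<And>j. j \<in> {1..n} \<Longrightarrow> B3 j \<in> sets M" unfolding B3_def using sB upos by blast
  define Bad where "Bad = B1 \<union> B2 \<union> (\<Union>j\<in>{1..n}. B3 j)"
  have sBad: "Bad \<in> sets M" unfolding Bad_def using sB1 sB2 sB3 by auto
  define c0 where "c0 = real n * exp (- (real N * t powr \<beta> / Q))"
  have c0: "0 \<le> c0" unfolding c0_def by simp
  define f where "f x = measure_pmf.prob (sample_wor (\<lambda>i. w x i powr \<beta>) N {1..n})
                {Is. \<not> ({i. 1 \<le> i \<and> w x i \<ge> t} \<subseteq> set Is)}" for x
  have good: "f x \<le> c0" if x: "x \<in> space M" "x \<notin> Bad" for x
  proof -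
    have c1: "atom_count (w x) {v..} \<noteq> 0" using x unfolding Bad_def B1_def by auto
    have fin: "finite {i. 1 \<le> i \<and> w x i \<in> {s..}}" if "v \<le> s" for s
      by (rule finite_count[OF c1 that])
    have "w x (Suc n) < t"
    proof (rule ccontr)
      assume "\<not> w x (Suc n) < t"
      then have "Suc n \<le> atom_count (w x) {t..}"
        using count_ge[OF wdec fin[OF t], of "Suc n"] by simp
      then show False using x unfolding Bad_def B2_def by auto
    qed
    then have T: "{i. 1 \<le> i \<and> w x i \<ge> t} \<subseteq> {1..n}"
      using dec_le[OF wdec[of x], of "Suc n"] by (auto simp: not_less_eq_eq) (meson not_less_eq_eq le_less_trans not_le)
    have wu: "w x j < u j" if j: "j \<in> {1..n}" for j
    proof (rule ccontr)
      assume "\<not> w x j < u j"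
      then have "j \<le> atom_count (w x) {u j..}"
        using count_ge[OF wdec fin[OF u[OF j]], of j] j by simp
      then show False using x j unfolding Bad_def B3_def by auto
    qed
    define p where "p i = w x i powr \<beta>" for i
    define S where "S = sum p {1..n}"
    have ppos: "0 < p i" if "i \<in> {1..n}" for i
    proof -
      have "0 < w x i" using wpos that by auto
      then show ?thesis unfolding p_def by simp
    qed
    have Spos: "0 < S" unfolding S_def using ppos n by (intro sum_pos) auto
    have SQ: "S \<le> Q"
    proof -
      have "S \<le> (\<Sum>j=1..n. u j powr \<beta>)" unfolding S_def p_def
        using wu wpos b by (intro sum_mono powr_mono2) (auto intro: less_imp_le)
      then show ?thesis using Q by simp
    qed
    have Qpos: "0 < Q" using Spos SQ by simp
    have one: "measure_pmf.prob (sample_wor p N {1..n}) {Is. i \<notin> set Is} \<le> exp (- (real N * t powr \<beta> / Q))"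
      if i: "i \<in> {i. 1 \<le> i \<and> w x i \<ge> t}" for i
    proof -
      have iS: "i \<in> {1..n}" using T i by blast
      have "measure_pmf.prob (sample_wor p N {1..n}) {Is. i \<notin> set Is} \<le> (1 - p i / S) ^ N"
        unfolding S_def by (rule sample_miss) (use iS ppos in auto)
      also have "\<dots> \<le> (exp (- (t powr \<beta> / Q))) ^ N"
      proof (rule power_mono)
        have "p i \<le> S" unfolding S_def by (rule member_le_sum) (use iS ppos in \<open>auto intro: less_imp_le\<close>)
        then show "0 \<le> 1 - p i / S" using Spos by simp
        have "t powr \<beta> \<le> p i" unfolding p_def using i tpos b by (intro powr_mono2) auto
        then have "t powr \<beta> / Q \<le> p i / S"
          using Spos SQ tpos ppos[OF iS] by (intro frac_le) auto
        then have "1 - p i / S \<le> 1 - t powr \<beta> / Q" by simp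
        also have "\<dots> \<le> exp (- (t powr \<beta> / Q))"
          using exp_ge_add_one_self[of "- (t powr \<beta> / Q)"] by simp
        finally show "1 - p i / S \<le> exp (- (t powr \<beta> / Q))" .
      qed
      also have "\<dots> = exp (- (real N * t powr \<beta> / Q))"
        by (simp flip: exp_of_nat_mult)
      finally show ?thesis .
    qed
    have eqU: "{Is. \<not> ({i. 1 \<le> i \<and> w x i \<ge> t} \<subseteq> set Is)} = (\<Union>i\<in>{i. 1 \<le> i \<and> w x i \<ge> t}. {Is. i \<notin> set Is})"
      by auto
    have finT: "finite {i. 1 \<le> i \<and> w x i \<ge> t}" using T finite_subset by blast
    have "f x = measure_pmf.prob (sample_wor p N {1..n}) (\<Union>i\<in>{i. 1 \<le> i \<and> w x i \<ge> t}. {Is. i \<notin> set Is})"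
      unfolding f_def p_def eqU ..
    also have "\<dots> \<le> (\<Sum>i\<in>{i. 1 \<le> i \<and> w x i \<ge> t}. measure_pmf.prob (sample_wor p N {1..n}) {Is. i \<notin> set Is})"
      by (rule measure_pmf.finite_measure_subadditive_finite) (use finT in auto)
    also have "\<dots> \<le> (\<Sum>i\<in>{i. 1 \<le> i \<and> w x i \<ge> t}. exp (- (real N * t powr \<beta> / Q)))"
      by (rule sum_mono) (rule one)
    also have "\<dots> = real (card {i. 1 \<le> i \<and> w x i \<ge> t}) * exp (- (real N * t powr \<beta> / Q))"
      by simp
    also have "\<dots> \<le> c0" unfolding c0_def
      using card_mono[OF _ T] by (intro mult_right_mono) auto
    finally show ?thesis .
  qed
  have fle: "ennreal (f x) \<le> indicator Bad x + ennreal c0" if "x \<in> space M" for x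
  proof (cases "x \<in> Bad")
    case True
    have "f x \<le> 1" unfolding f_def by simp
    then have "ennreal (f x) \<le> 1" by simp
    also have "\<dots> \<le> indicator Bad x + ennreal c0" using True by simp
    finally show ?thesis .
  next
    case False
    then show ?thesis using good[OF that False] by (simp add: ennreal_leI)
  qed
  have "(\<integral>\<^sup>+ x. ennreal (f x) \<partial>M) \<le> (\<integral>\<^sup>+ x. (indicator Bad x + ennreal c0) \<partial>M)"
    by (rule nn_integral_mono) (rule fle)
  also have "\<dots> = emeasure M Bad + ennreal c0"
    using sBad by (simp add: nn_integral_add emeasure_space_1)
  also have "\<dots> = ennreal (measure M Bad + c0)"
    using c0 by (simp add: emeasure_eq_measure ennreal_plus)
  finally have "enn2real (\<integral>\<^sup>+ x. ennreal (f x) \<partial>M) \<le> measure M Bad + c0"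
    using c0 by (simp add: enn2real_leI)
  also have "measure M Bad \<le> measure M B1 + measure M B2 + (\<Sum>j=1..n. measure M (B3 j))"
  proof -
    have "measure M Bad \<le> measure M (B1 \<union> B2) + measure M (\<Union>j\<in>{1..n}. B3 j)"
      unfolding Bad_def using sB1 sB2 sB3 by (intro measure_Un_le) auto
    also have "measure M (B1 \<union> B2) \<le> measure M B1 + measure M B2"
      using sB1 sB2 by (intro measure_Un_le) auto
    also have "measure M (\<Union>j\<in>{1..n}. B3 j) \<le> (\<Sum>j=1..n. measure M (B3 j))"
      using sB3 by (intro finite_measure_subadditive_finite) auto
    finally show ?thesis by simp
  qed
  finally show ?thesis unfolding f_def c0_def by simp
qed



lemma geom_bound:
  fixes q :: real assumes "0 \<le> q" "2 * q \<le> 1"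
  shows "(\<Sum>j=1..n. q ^ j) \<le> 2 * q - 2 * q ^ Suc n"
proof (induction n)
  case 0 then show ?case by simp
next
  case (Suc n)
  have "q ^ Suc (Suc n) * 2 \<le> q ^ Suc n"
    using assms mult_left_mono[of "2*q" 1 "q ^ Suc n"] by (simp add: mult_ac)
  then show ?case using Suc by simp
qed

lemma ppp_pmf:
  assumes "is_ppp_atoms M w" "B \<in> sets borel" "0 < t" "B \<subseteq> {t..}"
  shows "measure M {x \<in> space M. atom_count (w x) B = k} = ppp_intensity B ^ k / fact k * exp (- ppp_intensity B)"
  using assms unfolding is_ppp_atoms_def by blast

lemma main_bound:
  fixes M :: "'a measure" and w :: "'a \<Rightarrow> nat \<Rightarrow> real" and N :: nat
  assumes ppp: "is_ppp_atoms M w" and b: "0 < \<beta>" "\<beta> < 1" and g: "1 \<le> \<gamma>"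
    and a: "0 < a" "a \<le> \<gamma>" and d: "0 < \<delta>" and ident: "1 - a * \<beta> - \<gamma> * (1 - \<beta>) = 2 * \<beta> * \<delta>"
    and N: "1 \<le> N" and H1: "exp 1 * real N powr (a - \<gamma>) \<le> 1"
    and H2: "2 * (exp 1 * real N powr (- \<delta>)) \<le> 1"
  shows "enn2real (\<integral>\<^sup>+ x. ennreal (measure_pmf.prob
                (sample_wor (\<lambda>i. w x i powr \<beta>) N {1..nat \<lceil>real N powr \<gamma>\<rceil>})
                {Is. \<not> ({i. 1 \<le> i \<and> w x i \<ge> real N powr (- a)} \<subseteq> set Is)}) \<partial>M)
     \<le> exp (- real N) + exp 1 * real N powr (a - \<gamma>) + 2 * (exp 1 * real N powr (- \<delta>))
        + 2 * real N powr \<gamma> * exp (- ((1 - \<beta>) / 2 * real N powr (\<beta> * \<delta>)))"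
proof -
  interpret prob_space M using ppp unfolding is_ppp_atoms_def by blast
  define n where "n = nat \<lceil>real N powr \<gamma>\<rceil>"
  define t where "t = real N powr (- a)"
  define v where "v = 1 / real n"
  define u where "u j = real N powr \<delta> / real j" for j :: nat
  define Q where "Q = real N powr (\<delta> * \<beta>) * real n powr (1 - \<beta>) / (1 - \<beta>)"
  have Npos: "0 < real N" using N by simp
  have N1: "1 \<le> real N" using N by simp
  have NG: "real N \<le> real N powr \<gamma>"
    using powr_mono[OF g N1] Npos by simp
  have cz: "0 \<le> \<lceil>real N powr \<gamma>\<rceil>" by (simp add: order.strict_trans2[of "-1" 0])
  have rn: "real n = real_of_int \<lceil>real N powr \<gamma>\<rceil>" unfolding n_def using cz by simp
  have nge: "real N powr \<gamma> \<le> real n" unfolding rn by (rule le_of_int_ceiling)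
  have nle: "real n \<le> real N powr \<gamma> + 1" unfolding rn by (rule of_int_ceiling_le_add_one)
  have n2: "real n \<le> 2 * real N powr \<gamma>" using nle NG N1 by linarith
  have n1: "1 \<le> n" using nge NG N1 by simp
  have npos: "0 < real n" using n1 by simp
  have NaNg: "real N powr a \<le> real N powr \<gamma>" using powr_mono[OF a(2) N1] .
  have vpos: "0 < v" unfolding v_def using npos by simp
  have vt: "v \<le> t"
  proof -
    have "real N powr a \<le> real n" using NaNg nge by linarith
    then have "1 / real n \<le> 1 / real N powr a" using Npos npos by (intro divide_left_mono) auto
    then show ?thesis unfolding v_def t_def by (simp add: powr_minus_divide)
  qed
  have vu: "v \<le> u j" if j: "j \<in> {1..n}" for j
  proof -
    have "1 \<le> real N powr \<delta>" using d N1 by (simp add: ge_one_powr_ge_zero)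
    then have "1 / real j \<le> real N powr \<delta> / real j" using j by (intro divide_right_mono) auto
    moreover have "1 / real n \<le> 1 / real j" using j by (intro divide_left_mono) auto
    ultimately show ?thesis unfolding v_def u_def by linarith
  qed
  have Qb: "(\<Sum>j=1..n. u j powr \<beta>) \<le> Q"
  proof -
    have "(\<Sum>j=1..n. u j powr \<beta>) = (\<Sum>j=1..n. real N powr (\<delta> * \<beta>) * real j powr (- \<beta>))"
      unfolding u_def using Npos
      by (intro sum.cong) (auto simp: powr_divide powr_powr powr_minus_divide)
    also have "\<dots> = real N powr (\<delta> * \<beta>) * (\<Sum>j=1..n. real j powr (- \<beta>))"
      by (simp add: sum_distrib_left)
    also have "\<dots> \<le> real N powr (\<delta> * \<beta>) * (real n powr (1 - \<beta>) / (1 - \<beta>))"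
      by (intro mult_left_mono sum_powr_bound b) auto
    finally show ?thesis unfolding Q_def by simp
  qed
  note P = per_N[OF ppp b n1 vpos vt vu Qb, of N]
  have m1: "measure M {x \<in> space M. atom_count (w x) {v..} = 0} \<le> exp (- real N)"
  proof -
    have "measure M {x \<in> space M. atom_count (w x) {v..} = 0} = ppp_intensity {v..} ^ 0 / fact 0 * exp (- ppp_intensity {v..})"
      by (rule ppp_pmf[OF ppp _ vpos order.refl]) simp
    also have "\<dots> = exp (- real n)" using intensity_Ici[OF vpos] npos unfolding v_def by simp
    also have "\<dots> \<le> exp (- real N)" using nge NG by simp
    finally show ?thesis .
  qed
  have m2: "measure M {x \<in> space M. Suc n \<le> atom_count (w x) {t..}} \<le> exp 1 * real N powr (a - \<gamma>)"
  proof -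
    have tpos: "0 < t" unfolding t_def using Npos by simp
    have Lt: "ppp_intensity {t..} = real N powr a"
      using intensity_Ici[OF tpos] Npos unfolding t_def by (simp add: powr_minus_divide)
    define c where "c = real (Suc n) / real N powr a"
    have Napos: "0 < real N powr a" using Npos by simp
    have c1: "1 \<le> c" unfolding c_def using NaNg nge Napos by (simp add: field_simps)
    have "measure M {x \<in> space M. Suc n \<le> atom_count (w x) {t..}} \<le> exp (c * ppp_intensity {t..}) / c ^ Suc n"
      by (rule tail_bound(2)[OF ppp _ tpos order.refl _ c1]) (use Lt Napos in auto)
    also have "exp (c * ppp_intensity {t..}) = exp 1 ^ Suc n"
    proof -
      have "c * ppp_intensity {t..} = real (Suc n) * 1" unfolding Lt c_def using Napos by simp
      then show ?thesis by (simp only: exp_of_nat_mult)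
    qed
    also have "exp 1 ^ Suc n / c ^ Suc n = (exp 1 / c) ^ Suc n" by (simp add: power_divide)
    also have "\<dots> \<le> exp 1 / c"
    proof -
      have "exp 1 / c = exp 1 * real N powr a / real (Suc n)" unfolding c_def by simp
      also have "\<dots> \<le> exp 1 * real N powr a / real N powr \<gamma>"
        using nge Npos by (intro divide_left_mono mult_pos_pos) auto
      also have "\<dots> = exp 1 * real N powr (a - \<gamma>)" using Npos by (simp add: powr_diff)
      finally have r: "exp 1 / c \<le> exp 1 * real N powr (a - \<gamma>)" .
      then have "exp 1 / c \<le> 1" using H1 by linarith
      moreover have "0 \<le> exp 1 / c" using c1 by simp
      ultimately have "(exp 1 / c) ^ n \<le> 1" by (intro power_le_one)
      then have "(exp 1 / c) * (exp 1 / c) ^ n \<le> exp 1 / c"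
        using \<open>0 \<le> exp 1 / c\<close> by (intro mult_left_le)
      then show ?thesis by simp
    qed
    also have "\<dots> \<le> exp 1 * real N powr (a - \<gamma>)"
    proof -
      have "exp 1 / c = exp 1 * real N powr a / real (Suc n)" unfolding c_def by simp
      also have "\<dots> \<le> exp 1 * real N powr a / real N powr \<gamma>"
        using nge Npos by (intro divide_left_mono mult_pos_pos) auto
      also have "\<dots> = exp 1 * real N powr (a - \<gamma>)" using Npos by (simp add: powr_diff)
      finally show ?thesis .
    qed
    finally show ?thesis .
  qed
  define q where "q = exp 1 * real N powr (- \<delta>)"
  have q0: "0 \<le> q" unfolding q_def by simp
  have m3: "measure M {x \<in> space M. j \<le> atom_count (w x) {u j..}} \<le> q ^ j" if j: "j \<in> {1..n}" for j
  proof -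
    have upos: "0 < u j" unfolding u_def using j Npos by simp
    have Lu: "ppp_intensity {u j..} = real j / real N powr \<delta>"
      using intensity_Ici[OF upos] unfolding u_def by simp
    have c1: "1 \<le> real N powr \<delta>" using d N1 by (simp add: ge_one_powr_ge_zero)
    have "measure M {x \<in> space M. j \<le> atom_count (w x) {u j..}} \<le> exp (real N powr \<delta> * ppp_intensity {u j..}) / (real N powr \<delta>) ^ j"
      by (rule tail_bound(2)[OF ppp _ upos order.refl _ c1]) (use Lu j Npos in auto)
    also have "\<dots> = q ^ j"
      unfolding Lu q_def using Npos
      by (simp add: power_mult_distrib powr_minus_divide power_divide flip: exp_of_nat_mult)
    finally show ?thesis .
  qed
  have m3s: "(\<Sum>j=1..n. measure M {x \<in> space M. j \<le> atom_count (w x) {u j..}}) \<le> 2 * q"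
  proof -
    have "(\<Sum>j=1..n. measure M {x \<in> space M. j \<le> atom_count (w x) {u j..}}) \<le> (\<Sum>j=1..n. q ^ j)"
      by (rule sum_mono) (rule m3)
    also have "\<dots> \<le> 2 * q - 2 * q ^ Suc n" using H2 q0 unfolding q_def by (intro geom_bound) auto
    also have "\<dots> \<le> 2 * q" using q0 by simp
    finally show ?thesis .
  qed
  have m4: "real n * exp (- (real N * t powr \<beta> / Q)) \<le> 2 * real N powr \<gamma> * exp (- ((1 - \<beta>) / 2 * real N powr (\<beta> * \<delta>)))"
  proof (rule mult_mono)
    show "real n \<le> 2 * real N powr \<gamma>" by (rule n2)
    have "real n powr (1 - \<beta>) \<le> (2 * real N powr \<gamma>) powr (1 - \<beta>)"
      using n2 npos b by (intro powr_mono2) auto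
    also have "\<dots> = 2 powr (1 - \<beta>) * real N powr (\<gamma> * (1 - \<beta>))"
      using Npos by (simp add: powr_mult powr_powr)
    also have "\<dots> \<le> 2 * real N powr (\<gamma> * (1 - \<beta>))"
    proof -
      have "2 powr (1 - \<beta>) \<le> 2 powr 1" using b by (intro powr_mono) auto
      then show ?thesis by (intro mult_right_mono) auto
    qed
    finally have nb: "real n powr (1 - \<beta>) \<le> 2 * real N powr (\<gamma> * (1 - \<beta>))" .
    have Qle: "Q \<le> real N powr (\<delta> * \<beta>) * (2 * real N powr (\<gamma> * (1 - \<beta>))) / (1 - \<beta>)"
      unfolding Q_def using nb b by (intro divide_right_mono mult_left_mono) auto
    have Qpos: "0 < Q" unfolding Q_def using Npos npos b by simp
    have "(1 - \<beta>) / 2 * real N powr (\<beta> * \<delta>) = real N * t powr \<beta> / (real N powr (\<delta> * \<beta>) * (2 * real N powr (\<gamma> * (1 - \<beta>))) / (1 - \<beta>))"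
    proof -
      have e: "real N * t powr \<beta> = real N powr (1 - a * \<beta>)"
      proof -
        have "t powr \<beta> = real N powr (- a * \<beta>)" unfolding t_def by (simp add: powr_powr)
        then have "real N * t powr \<beta> = real N powr 1 * real N powr (- a * \<beta>)" using Npos by simp
        also have "\<dots> = real N powr (1 + - a * \<beta>)" by (rule powr_add[symmetric])
        finally show ?thesis by simp
      qed
      have "real N powr (1 - a * \<beta>) = real N powr (\<beta> * \<delta>) * (real N powr (\<delta> * \<beta>) * real N powr (\<gamma> * (1 - \<beta>)))"
      proof -
        have ex: "1 - a * \<beta> = \<beta> * \<delta> + (\<delta> * \<beta> + \<gamma> * (1 - \<beta>))" using ident by (simp add: algebra_simps)
        show ?thesis unfolding ex by (simp only: powr_add)
      qed
      then show ?thesis unfolding e using b Npos by (simp add: field_simps)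
    qed
    also have "\<dots> \<le> real N * t powr \<beta> / Q"
      using Qle Qpos Npos b unfolding t_def by (intro divide_left_mono) (auto intro!: mult_pos_pos divide_pos_pos)
    finally show "exp (- (real N * t powr \<beta> / Q)) \<le> exp (- ((1 - \<beta>) / 2 * real N powr (\<beta> * \<delta>)))"
      by simp
  qed auto
  show ?thesis
    using P m1 m2 m3s m4 unfolding t_def[symmetric] n_def[symmetric] q_def by linarith
qed



theorem proposition6p1:
  fixes M :: "'a measure" and w :: "'a \<Rightarrow> nat \<Rightarrow> real"
    and \<gamma> \<beta> \<epsilon> :: real
  assumes "\<gamma> > 1" and "\<beta> < 1" and "1 - 1 / \<gamma> < \<beta>"
    and ppp: "is_ppp_atoms M w"
    and "0 < \<epsilon>" and "\<epsilon> < (1 - \<gamma> * (1 - \<beta>)) / \<beta>"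
  shows "(\<lambda>N::nat. ln (real N) *
            enn2real (\<integral>\<^sup>+ x. ennreal (measure_pmf.prob
                (sample_wor (\<lambda>i. w x i powr \<beta>) N {1..nat \<lceil>real N powr \<gamma>\<rceil>})
                {Is. \<not> ({i. 1 \<le> i \<and> w x i \<ge> real N powr (- ((1 - \<gamma> * (1 - \<beta>)) / \<beta> - \<epsilon>))}
                        \<subseteq> set Is)}) \<partial>M))
         \<longlonglongrightarrow> 0"
proof -
  define a where "a = (1 - \<gamma> * (1 - \<beta>)) / \<beta> - \<epsilon>"
  define \<delta> where "\<delta> = \<epsilon> / 2"
  have g: "1 < \<gamma>" using assms by simp
  have "0 < 1 - 1 / \<gamma>" using g by (simp add: field_simps)
  then have b0: "0 < \<beta>" using assms by linarith
  have b1: "\<beta> < 1" using assms by simp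
  have a0: "0 < a" unfolding a_def using assms by simp
  have "1 - \<gamma> * (1 - \<beta>) < \<beta>"
  proof -
    have "1 - \<beta> < \<gamma> * (1 - \<beta>)" using g b1 by simp
    then show ?thesis by linarith
  qed
  then have "(1 - \<gamma> * (1 - \<beta>)) / \<beta> < 1" using b0 by (simp add: divide_less_eq)
  then have ag: "a \<le> \<gamma>" unfolding a_def using assms by linarith
  have d0: "0 < \<delta>" unfolding \<delta>_def using assms by simp
  have ident: "1 - a * \<beta> - \<gamma> * (1 - \<beta>) = 2 * \<beta> * \<delta>"
    unfolding a_def \<delta>_def using b0 by (simp add: field_simps)
  define G where "G x = ln x * exp (- x) + exp 1 * (ln x * x powr (a - \<gamma>)) + 2 * exp 1 * (ln x * x powr (- \<delta>))
      + 2 * (ln x * x powr \<gamma> * exp (- ((1 - \<beta>) / 2 * x powr (\<beta> * \<delta>))))" for x :: real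
  have agn: "a - \<gamma> < 0" using a0 assms ag \<open>(1 - \<gamma> * (1 - \<beta>)) / \<beta> < 1\<close> unfolding a_def by linarith
  have kb: "0 < (1 - \<beta>) / 2" using b1 by simp
  have bd: "0 < \<beta> * \<delta>" using b0 d0 by simp
  have l1: "((\<lambda>x::real. ln x * exp (- x)) \<longlongrightarrow> 0) at_top" by real_asymp
  have l2: "((\<lambda>x::real. ln x * x powr (a - \<gamma>)) \<longlongrightarrow> 0) at_top" using agn by real_asymp
  have l3: "((\<lambda>x::real. ln x * x powr (- \<delta>)) \<longlongrightarrow> 0) at_top" using d0 by real_asymp
  have l4: "((\<lambda>x::real. ln x * x powr \<gamma> * exp (- ((1 - \<beta>) / 2 * x powr (\<beta> * \<delta>)))) \<longlongrightarrow> 0) at_top"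
    using kb bd by real_asymp
  have lG: "(G \<longlongrightarrow> 0) at_top"
    unfolding G_def
    using tendsto_add[OF tendsto_add[OF tendsto_add[OF l1 tendsto_mult[OF tendsto_const l2, of "exp 1"]]
        tendsto_mult[OF tendsto_const l3, of "2 * exp 1"]] tendsto_mult[OF tendsto_const l4, of 2]]
    by simp
  have lGN: "(\<lambda>N::nat. G (real N)) \<longlonglongrightarrow> 0"
    by (rule filterlim_compose[OF lG filterlim_real_sequentially])
  have e1: "\<forall>\<^sub>F x in at_top. exp 1 * (x::real) powr (a - \<gamma>) \<le> 1" using agn by real_asymp
  have e2: "\<forall>\<^sub>F x in at_top. 2 * (exp 1 * (x::real) powr (- \<delta>)) \<le> 1" using d0 by real_asymp
  have ev: "\<forall>\<^sub>F N in sequentially. 1 \<le> N \<and> exp 1 * real N powr (a - \<gamma>) \<le> 1 \<and> 2 * (exp 1 * real N powr (- \<delta>)) \<le> 1"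
    using eventually_ge_at_top[of 1] eventually_compose_filterlim[OF e1 filterlim_real_sequentially]
      eventually_compose_filterlim[OF e2 filterlim_real_sequentially]
    by eventually_elim auto
  show ?thesis
    unfolding a_def[symmetric]
  proof (rule tendsto_sandwich[OF _ _ tendsto_const lGN])
    show "\<forall>\<^sub>F N in sequentially. 0 \<le> ln (real N) *
            enn2real (\<integral>\<^sup>+ x. ennreal (measure_pmf.prob
                (sample_wor (\<lambda>i. w x i powr \<beta>) N {1..nat \<lceil>real N powr \<gamma>\<rceil>})
                {Is. \<not> ({i. 1 \<le> i \<and> w x i \<ge> real N powr (- a)} \<subseteq> set Is)}) \<partial>M)"
      using eventually_ge_at_top[of 1] by eventually_elim (auto intro!: mult_nonneg_nonneg)
    show "\<forall>\<^sub>F N in sequentially. ln (real N) *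
            enn2real (\<integral>\<^sup>+ x. ennreal (measure_pmf.prob
                (sample_wor (\<lambda>i. w x i powr \<beta>) N {1..nat \<lceil>real N powr \<gamma>\<rceil>})
                {Is. \<not> ({i. 1 \<le> i \<and> w x i \<ge> real N powr (- a)} \<subseteq> set Is)}) \<partial>M) \<le> G (real N)"
      using ev
    proof eventually_elim
      case (elim N)
      have lnp: "0 \<le> ln (real N)" using elim by simp
      have mb: "enn2real (\<integral>\<^sup>+ x. ennreal (measure_pmf.prob
                (sample_wor (\<lambda>i. w x i powr \<beta>) N {1..nat \<lceil>real N powr \<gamma>\<rceil>})
                {Is. \<not> ({i. 1 \<le> i \<and> w x i \<ge> real N powr (- a)} \<subseteq> set Is)}) \<partial>M)
         \<le> exp (- real N) + exp 1 * real N powr (a - \<gamma>) + 2 * (exp 1 * real N powr (- \<delta>))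
        + 2 * real N powr \<gamma> * exp (- ((1 - \<beta>) / 2 * real N powr (\<beta> * \<delta>)))"
        by (rule main_bound[OF ppp b0 b1 _ a0 ag d0 ident]) (use elim g in auto)
      have "ln (real N) * enn2real (\<integral>\<^sup>+ x. ennreal (measure_pmf.prob
                (sample_wor (\<lambda>i. w x i powr \<beta>) N {1..nat \<lceil>real N powr \<gamma>\<rceil>})
                {Is. \<not> ({i. 1 \<le> i \<and> w x i \<ge> real N powr (- a)} \<subseteq> set Is)}) \<partial>M)
         \<le> ln (real N) * (exp (- real N) + exp 1 * real N powr (a - \<gamma>) + 2 * (exp 1 * real N powr (- \<delta>))
        + 2 * real N powr \<gamma> * exp (- ((1 - \<beta>) / 2 * real N powr (\<beta> * \<delta>))))"
        by (rule mult_left_mono[OF mb lnp])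
      also have "\<dots> = G (real N)" unfolding G_def by (simp add: algebra_simps)
      finally show ?case .
    qed
  qed
qed

end
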